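(* For every integer $n>0$, if hyperplanes $h_1,\dots,h_k$ in $\mathbb{R}^n$ form a skew cover of $\{\pm1\}^n$, then $k\ge n/2$.
   Context: Hyperplanes $h_i=\{x\in\mathbb{R}^n:\langle v_i,x\rangle=\mu_i\}$, $i\in[k]$, form a skew cover of $\{\pm1\}^n$ if every vertex of $\{\pm1\}^n$ lies in at least one $h_i$ and, for each $i\in[k]$, every coordinate of $v_i$ is non-zero. *)

theory Defs
  imports "HOL-Analysis.Analysis"
begin

definition cube_vertices :: "(real ^ 'n) set" where
  "cube_vertices = {x. \<forall>j. x $ j = 1 \<or> x $ j = -1}"

definition skew_cover :: "nat \<Rightarrow> (nat \<Rightarrow> real ^ 'n) \<Rightarrow> (nat \<Rightarrow> real) \<Rightarrow> bool" where
  "skew_cover k v mu \<longleftrightarrow>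
     (\<forall>x\<in>cube_vertices. \<exists>i<k. v i \<bullet> x = mu i) \<and>
     (\<forall>i<k. \<forall>j. v i $ j \<noteq> 0)"

end

theory Submission
  imports Defs
begin

lemma card_Compl':
  fixes T :: "'n::finite set"
  shows "card (-T) = CARD('n) - card T"
  by (simp add: Compl_eq_Diff_UNIV card_Diff_subset)

lemma R1:
  fixes g :: "'n::finite set \<Rightarrow> 'n \<Rightarrow> real"
  shows "(\<Sum>S\<in>UNIV. \<Sum>j\<in>S. g (S - {j}) j) = (\<Sum>T\<in>UNIV. \<Sum>j\<in>-T. g T j)"
proof -
  have "(\<Sum>S\<in>UNIV. \<Sum>j\<in>S. g (S - {j}) j) = (\<Sum>(S,j)\<in>Sigma UNIV (\<lambda>S. S). g (S - {j}) j)"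
    by (rule sum.Sigma) auto
  also have "\<dots> = (\<Sum>(T,j)\<in>Sigma UNIV (\<lambda>T. -T). g T j)"
    by (rule sum.reindex_bij_witness[where i="\<lambda>(T,j). (insert j T, j)" and j="\<lambda>(S,j). (S - {j}, j)"]) auto
  also have "\<dots> = (\<Sum>T\<in>UNIV. \<Sum>j\<in>-T. g T j)" by (rule sum.Sigma[symmetric]) auto
  finally show ?thesis .
qed

definition eop :: "('n::finite set \<Rightarrow> real) \<Rightarrow> 'n set \<Rightarrow> real" where
  "eop f S = (\<Sum>j\<in>S. f (S - {j}))"

definition dop :: "('n::finite set \<Rightarrow> real) \<Rightarrow> 'n set \<Rightarrow> real" where
  "dop f T = (\<Sum>j\<in>-T. f (insert j T))"

lemma eop_sq:
  fixes f :: "'n::finite set \<Rightarrow> real"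
  defines "X \<equiv> (\<Sum>U\<in>UNIV. \<Sum>l\<in>-U. \<Sum>j\<in>-(insert l U). f (insert l U) * f (insert j U))"
  shows "(\<Sum>S\<in>UNIV. (eop f S)^2) = (\<Sum>T\<in>UNIV. real (card (-T)) * (f T)^2) + X"
proof -
  have sq: "(eop f S)^2 = (\<Sum>j\<in>S. (f (S - {j}))^2) + (\<Sum>j\<in>S. \<Sum>l\<in>S - {j}. f (S - {j}) * f (S - {l}))" for S
  proof -
    have "(eop f S)^2 = (\<Sum>j\<in>S. \<Sum>l\<in>S. f (S - {j}) * f (S - {l}))"
      unfolding eop_def power2_eq_square sum_product by simp
    also have "\<dots> = (\<Sum>j\<in>S. (f (S - {j}))^2 + (\<Sum>l\<in>S - {j}. f (S - {j}) * f (S - {l})))"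
    proof (rule sum.cong[OF refl])
      fix j assume j: "j \<in> S"
      show "(\<Sum>l\<in>S. f (S - {j}) * f (S - {l})) = (f (S - {j}))^2 + (\<Sum>l\<in>S - {j}. f (S - {j}) * f (S - {l}))"
        by (subst sum.remove[of _ j]) (use j in \<open>auto simp: power2_eq_square\<close>)
    qed
    finally show ?thesis by (simp add: sum.distrib)
  qed
  have A: "(\<Sum>S\<in>UNIV. \<Sum>j\<in>S. (f (S - {j}))^2) = (\<Sum>T\<in>UNIV. real (card (-T)) * (f T)^2)"
    using R1[of "\<lambda>T j. (f T)^2"] by simp
  have B1: "(\<Sum>S\<in>UNIV. \<Sum>j\<in>S. \<Sum>l\<in>S - {j}. f (S - {j}) * f (S - {l}))
      = (\<Sum>S\<in>UNIV. \<Sum>j\<in>S. (\<lambda>T j. \<Sum>l\<in>T. f T * f (insert j (T - {l}))) (S - {j}) j)"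
  proof (rule sum.cong[OF refl], rule sum.cong[OF refl])
    fix S :: "'n set" and j assume "j \<in> S"
    then show "(\<Sum>l\<in>S - {j}. f (S - {j}) * f (S - {l})) = (\<lambda>T j. \<Sum>l\<in>T. f T * f (insert j (T - {l}))) (S - {j}) j"
      by (auto intro!: sum.cong arg_cong[where f=f])
  qed
  also have "\<dots> = (\<Sum>T\<in>UNIV. \<Sum>j\<in>-T. \<Sum>l\<in>T. f T * f (insert j (T - {l})))"
    by (rule R1)
  also have "\<dots> = (\<Sum>T\<in>UNIV. \<Sum>l\<in>T. \<Sum>j\<in>-T. f T * f (insert j (T - {l})))"
    by (rule sum.cong[OF refl], rule sum.swap)
  also have "\<dots> = (\<Sum>T\<in>UNIV. \<Sum>l\<in>T. (\<lambda>U l. \<Sum>j\<in>-(insert l U). f (insert l U) * f (insert j U)) (T - {l}) l)"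
  proof (rule sum.cong[OF refl], rule sum.cong[OF refl])
    fix T :: "'n set" and l assume "l \<in> T"
    then have "insert l (T - {l}) = T" by auto
    then show "(\<Sum>j\<in>-T. f T * f (insert j (T - {l}))) = (\<lambda>U l. \<Sum>j\<in>-(insert l U). f (insert l U) * f (insert j U)) (T - {l}) l"
      by simp
  qed
  also have "\<dots> = X" unfolding X_def by (rule R1)
  finally have B: "(\<Sum>S\<in>UNIV. \<Sum>j\<in>S. \<Sum>l\<in>S - {j}. f (S - {j}) * f (S - {l})) = X" .
  show ?thesis using A B by (simp add: sq sum.distrib)
qed

lemma dop_sq:
  fixes f :: "'n::finite set \<Rightarrow> real"
  defines "X \<equiv> (\<Sum>U\<in>UNIV. \<Sum>l\<in>-U. \<Sum>j\<in>-(insert l U). f (insert l U) * f (insert j U))"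
  shows "(\<Sum>T\<in>UNIV. (dop f T)^2) = (\<Sum>S\<in>UNIV. real (card S) * (f S)^2) + X"
proof -
  have sq: "(dop f T)^2 = (\<Sum>l\<in>-T. (f (insert l T))^2) + (\<Sum>l\<in>-T. \<Sum>j\<in>-(insert l T). f (insert l T) * f (insert j T))" for T
  proof -
    have "(dop f T)^2 = (\<Sum>l\<in>-T. \<Sum>j\<in>-T. f (insert l T) * f (insert j T))"
      unfolding dop_def power2_eq_square sum_product by simp
    also have "\<dots> = (\<Sum>l\<in>-T. (f (insert l T))^2 + (\<Sum>j\<in>-(insert l T). f (insert l T) * f (insert j T)))"
    proof (rule sum.cong[OF refl])
      fix l assume l: "l \<in> -T"
      have e: "-(insert l T) = -T - {l}" by auto
      show "(\<Sum>j\<in>-T. f (insert l T) * f (insert j T)) = (f (insert l T))^2 + (\<Sum>j\<in>-(insert l T). f (insert l T) * f (insert j T))"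
        unfolding e by (subst sum.remove[of _ l]) (use l in \<open>auto simp: power2_eq_square\<close>)
    qed
    finally show ?thesis by (simp add: sum.distrib)
  qed
  have A: "(\<Sum>T\<in>UNIV. \<Sum>l\<in>-T. (f (insert l T))^2) = (\<Sum>S\<in>UNIV. real (card S) * (f S)^2)"
  proof -
    have "(\<Sum>S\<in>UNIV. \<Sum>l\<in>S. (\<lambda>T l. (f (insert l T))^2) (S - {l}) l) = (\<Sum>T\<in>UNIV. \<Sum>l\<in>-T. (f (insert l T))^2)"
      by (rule R1)
    moreover have "(\<Sum>S\<in>UNIV. \<Sum>l\<in>S. (\<lambda>T l. (f (insert l T))^2) (S - {l}) l) = (\<Sum>S\<in>UNIV. real (card S) * (f S)^2)"
    proof (rule sum.cong[OF refl])
      fix S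
      have "(\<Sum>l\<in>S. (\<lambda>T l. (f (insert l T))^2) (S - {l}) l) = (\<Sum>l\<in>S. (f S)^2)"
        by (rule sum.cong[OF refl]) (simp add: insert_absorb)
      then show "(\<Sum>l\<in>S. (\<lambda>T l. (f (insert l T))^2) (S - {l}) l) = real (card S) * (f S)^2" by simp
    qed
    ultimately show ?thesis by simp
  qed
  show ?thesis using A unfolding X_def by (simp add: sq sum.distrib)
qed

lemma eop_inj:
  fixes f :: "'n::finite set \<Rightarrow> real"
  assumes supp: "\<And>S. card S \<noteq> d \<Longrightarrow> f S = 0"
    and d: "2 * d < CARD('n)"
    and z: "\<And>S. eop f S = 0"
  shows "f S = 0"
proof -
  define X where "X \<equiv> (\<Sum>U\<in>UNIV. \<Sum>l\<in>-U. \<Sum>j\<in>-(insert l U). f (insert l U) * f (insert j U))"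
  have "0 = (\<Sum>T\<in>UNIV. real (card (-T)) * (f T)^2) + X" using eop_sq[of f] z unfolding X_def by simp
  moreover have "(\<Sum>T\<in>UNIV. (dop f T)^2) = (\<Sum>S\<in>UNIV. real (card S) * (f S)^2) + X"
    using dop_sq[of f] unfolding X_def by simp
  ultimately have E: "(\<Sum>T\<in>UNIV. (real (card (-T)) - real (card T)) * (f T)^2) = - (\<Sum>T\<in>UNIV. (dop f T)^2)"
    by (simp add: algebra_simps sum_subtractf)
  have nn: "\<And>T. 0 \<le> (real (card (-T)) - real (card T)) * (f T)^2"
  proof -
    fix T :: "'n set"
    show "0 \<le> (real (card (-T)) - real (card T)) * (f T)^2"
    proof (cases "card T = d")
      case True
      have "card (-T) = CARD('n) - card T" by (simp add: card_Compl')
      then have "real (card (-T)) - real (card T) \<ge> 0" using True d by auto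
      then show ?thesis by simp
    next
      case False then show ?thesis using supp by simp
    qed
  qed
  have "(\<Sum>T\<in>UNIV. (dop f T)^2) \<ge> 0" by (simp add: sum_nonneg)
  moreover have "(\<Sum>T\<in>UNIV. (real (card (-T)) - real (card T)) * (f T)^2) \<ge> 0"
    by (rule sum_nonneg) (rule nn)
  ultimately have "(\<Sum>T\<in>UNIV. (real (card (-T)) - real (card T)) * (f T)^2) = 0"
    using E by linarith
  then have "\<forall>T\<in>UNIV. (real (card (-T)) - real (card T)) * (f T)^2 = 0"
    by (subst sum_nonneg_eq_0_iff[symmetric]) (use nn in auto)
  then have "(real (card (-S)) - real (card S)) * (f S)^2 = 0" by simp
  moreover have "card S = d \<Longrightarrow> real (card (-S)) - real (card S) > 0"
  proof -
    assume "card S = d"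
    moreover have "card (-S) = CARD('n) - card S" by (simp add: card_Compl')
    ultimately show ?thesis using d by auto
  qed
  ultimately show "f S = 0" using supp by (cases "card S = d") auto
qed


fun cc :: "(nat \<Rightarrow> real ^ 'n::finite) \<Rightarrow> nat \<Rightarrow> 'n set \<Rightarrow> real" where
  "cc v 0 S = (if S = {} then 1 else 0)"
| "cc v (Suc m) S = (\<Sum>j\<in>S. v m $ j * cc v m (S - {j}))"

lemma cc_supp: "card S \<noteq> m \<Longrightarrow> cc v m S = 0"
proof (induction m arbitrary: S)
  case 0 then show ?case by auto
next
  case (Suc m)
  have "cc v m (S - {j}) = 0" if "j \<in> S" for j
  proof -
    have "card S > 0" using that by (auto simp: card_gt_0_iff)
    then show ?thesis using Suc.prems that by (intro Suc.IH) (auto simp: card_Diff_singleton)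
  qed
  then show ?case by simp
qed

lemma cc_step:
  fixes v :: "nat \<Rightarrow> real ^ 'n::finite"
  assumes nz: "\<And>j. v m $ j \<noteq> 0" and d: "2 * m < CARD('n)" and ex: "cc v m S0 \<noteq> 0"
  shows "\<exists>S. cc v (Suc m) S \<noteq> 0"
proof (rule ccontr)
  assume "\<not> ?thesis"
  then have z: "\<And>S. cc v (Suc m) S = 0" by auto
  define f where "f S = cc v m S / (\<Prod>j\<in>S. v m $ j)" for S
  have pnz: "(\<Prod>j\<in>S. v m $ j) \<noteq> 0" for S using nz by (simp add: prod_zero_iff)
  have "eop f S = 0" for S
  proof -
    have "eop f S = (\<Sum>j\<in>S. v m $ j * cc v m (S - {j}) / (\<Prod>j\<in>S. v m $ j))"
      unfolding eop_def f_def
    proof (rule sum.cong[OF refl])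
      fix j assume j: "j \<in> S"
      have "(\<Prod>j\<in>S. v m $ j) = v m $ j * (\<Prod>j\<in>S - {j}. v m $ j)"
        using j by (simp add: prod.remove)
      then show "cc v m (S - {j}) / (\<Prod>j\<in>S - {j}. v m $ j) = v m $ j * cc v m (S - {j}) / (\<Prod>j\<in>S. v m $ j)"
        using nz[of j] by simp
    qed
    also have "\<dots> = cc v (Suc m) S / (\<Prod>j\<in>S. v m $ j)"
      by (simp add: sum_divide_distrib)
    finally show ?thesis using z by simp
  qed
  moreover have "card S \<noteq> m \<Longrightarrow> f S = 0" for S unfolding f_def by (simp add: cc_supp)
  ultimately have "f S0 = 0" using eop_inj[of m f] d by blast
  then show False using ex pnz[of S0] unfolding f_def by simp
qed

lemma cc_nonzero:
  fixes v :: "nat \<Rightarrow> real ^ 'n::finite"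
  assumes nz: "\<And>i j. i < k \<Longrightarrow> v i $ j \<noteq> 0" and d: "2 * k < CARD('n)"
  shows "m \<le> k \<Longrightarrow> \<exists>S. cc v m S \<noteq> 0"
proof (induction m)
  case 0 show ?case by (rule exI[of _ "{}"]) simp
next
  case (Suc m)
  then obtain S where "cc v m S \<noteq> 0" by auto
  then show ?case using cc_step[of v m S] nz[of m] Suc.prems d by auto
qed


definition yv :: "'n::finite set \<Rightarrow> 'n set \<Rightarrow> real ^ 'n \<Rightarrow> real ^ 'n" where
  "yv J A x = (\<chi> i. if i \<in> A then 1 else if i \<in> J then -1 else x $ i)"

definition upd :: "real ^ 'n::finite \<Rightarrow> 'n \<Rightarrow> real \<Rightarrow> real ^ 'n" where
  "upd x j c = (\<chi> i. if i = j then c else x $ i)"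

definition DD :: "'n::finite set \<Rightarrow> (real ^ 'n \<Rightarrow> real) \<Rightarrow> real ^ 'n \<Rightarrow> real" where
  "DD J F x = (\<Sum>A\<in>Pow J. (-1)^card (J - A) * F (yv J A x))"

lemma Pow_split:
  fixes G :: "'n::finite set \<Rightarrow> real"
  assumes j: "j \<in> J"
  shows "sum G (Pow J) = (\<Sum>A\<in>Pow (J - {j}). G (insert j A)) + (\<Sum>A\<in>Pow (J - {j}). G A)"
proof -
  have e: "Pow J = insert j ` Pow (J - {j}) \<union> Pow (J - {j})"
    using j Pow_insert[of j "J - {j}"] by (auto simp: insert_absorb)
  have inj: "inj_on (insert j) (Pow (J - {j}))"
    by (rule inj_onI) (metis Diff_insert_absorb Pow_iff insert_Diff_single subset_Diff_insert)
  have disj: "insert j ` Pow (J - {j}) \<inter> Pow (J - {j}) = {}" by auto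
  show ?thesis unfolding e
    by (subst sum.union_disjoint) (auto simp: disj sum.reindex[OF inj])
qed

lemma yv_ins: "j \<in> J \<Longrightarrow> A \<subseteq> J - {j} \<Longrightarrow> yv J (insert j A) x = yv (J - {j}) A (upd x j 1)"
  unfolding yv_def upd_def by (rule vec_eq_iff[THEN iffD2]) auto

lemma yv_noins: "j \<in> J \<Longrightarrow> A \<subseteq> J - {j} \<Longrightarrow> yv J A x = yv (J - {j}) A (upd x j (-1))"
  unfolding yv_def upd_def by (rule vec_eq_iff[THEN iffD2]) auto

lemma card_ins: "j \<in> J \<Longrightarrow> A \<subseteq> J - {j} \<Longrightarrow> card (J - insert j A) = card (J - {j} - A)"
  by (rule arg_cong[where f=card]) auto

lemma card_noins:
  fixes J :: "'n::finite set"
  shows "j \<in> J \<Longrightarrow> A \<subseteq> J - {j} \<Longrightarrow> card (J - A) = Suc (card (J - {j} - A))"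
proof -
  assume a: "j \<in> J" "A \<subseteq> J - {j}"
  then have "J - A = insert j (J - {j} - A)" by auto
  then show ?thesis by simp
qed

lemma DD_split:
  fixes J :: "'n::finite set"
  assumes j: "j \<in> J"
  shows "DD J F x = DD (J - {j}) F (upd x j 1) - DD (J - {j}) F (upd x j (-1))"
  unfolding DD_def
  using j by (simp add: Pow_split[OF j] yv_ins yv_noins card_ins card_noins sum_negf)

lemma DD_wsplit:
  fixes J :: "'n::finite set"
  assumes j: "j \<in> J"
  shows "(\<Sum>A\<in>Pow J. (-1)^card (J - A) * (if j \<in> A then 1 else -1) * F (yv J A x))
     = DD (J - {j}) F (upd x j 1) + DD (J - {j}) F (upd x j (-1))"
proof -
  have "\<And>A. A \<in> Pow (J - {j}) \<Longrightarrow> j \<notin> A" by auto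
  then show ?thesis
    unfolding DD_def
    using j by (simp add: Pow_split[OF j] yv_ins yv_noins card_ins card_noins)
qed

lemma DD_const:
  fixes J :: "'n::finite set"
  shows "DD J (\<lambda>_. c) x = (if J = {} then c else 0)"
proof (cases "J = {}")
  case True then show ?thesis by (simp add: DD_def)
next
  case False
  then obtain j where j: "j \<in> J" by auto
  show ?thesis using False by (simp add: DD_split[OF j]) (simp add: DD_def)
qed

definition PP :: "(nat \<Rightarrow> real ^ 'n::finite) \<Rightarrow> (nat \<Rightarrow> real) \<Rightarrow> nat \<Rightarrow> real ^ 'n \<Rightarrow> real" where
  "PP v mu m x = (\<Prod>i<m. v i \<bullet> x - mu i)"

lemma inner_yv:
  fixes J :: "'n::finite set" and w :: "real ^ 'n"
  assumes "A \<subseteq> J"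
  shows "w \<bullet> yv J A x = (\<Sum>i\<in>J. w $ i * (if i \<in> A then 1 else -1)) + (\<Sum>i\<in>-J. w $ i * x $ i)"
proof -
  have U: "(UNIV :: 'n set) = J \<union> -J" by auto
  have "w \<bullet> yv J A x = (\<Sum>i\<in>J \<union> -J. w $ i * yv J A x $ i)"
    unfolding inner_vec_def U[symmetric] by simp
  also have "\<dots> = (\<Sum>i\<in>J. w $ i * yv J A x $ i) + (\<Sum>i\<in>-J. w $ i * yv J A x $ i)"
    by (rule sum.union_disjoint) auto
  also have "\<dots> = (\<Sum>i\<in>J. w $ i * (if i \<in> A then 1 else -1)) + (\<Sum>i\<in>-J. w $ i * x $ i)"
  proof -
    have "(\<Sum>i\<in>J. w $ i * yv J A x $ i) = (\<Sum>i\<in>J. w $ i * (if i \<in> A then 1 else -1))"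
      using assms by (intro sum.cong) (auto simp: yv_def)
    moreover have "(\<Sum>i\<in>-J. w $ i * yv J A x $ i) = (\<Sum>i\<in>-J. w $ i * x $ i)"
      using assms by (intro sum.cong) (auto simp: yv_def)
    ultimately show ?thesis by simp
  qed
  finally show ?thesis .
qed

lemma DD_PP:
  fixes v :: "nat \<Rightarrow> real ^ 'n::finite"
  shows "m \<le> card J \<Longrightarrow> DD J (PP v mu m) x = 2 ^ card J * cc v m J"
proof (induction m arbitrary: J x)
  case 0
  have "PP v mu 0 = (\<lambda>_. 1)" by (simp add: PP_def fun_eq_iff)
  then show ?case by (simp add: DD_const)
next
  case (Suc m)
  define B where "B = (\<Sum>i\<in>-J. v m $ i * x $ i) - mu m"
  define s where "s A = (-1::real)^card (J - A) * PP v mu m (yv J A x)" for A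
  define W where "W i = (\<Sum>A\<in>Pow J. (-1)^card (J - A) * (if i \<in> A then 1 else -1) * PP v mu m (yv J A x))" for i
  have "DD J (PP v mu (Suc m)) x = (\<Sum>A\<in>Pow J. s A * ((\<Sum>i\<in>J. v m $ i * (if i \<in> A then 1 else -1)) + B))"
    unfolding DD_def s_def B_def
    by (rule sum.cong[OF refl]) (simp add: PP_def inner_yv)
  also have "\<dots> = B * (\<Sum>A\<in>Pow J. s A) + (\<Sum>A\<in>Pow J. \<Sum>i\<in>J. v m $ i * (s A * (if i \<in> A then 1 else -1)))"
    by (simp add: algebra_simps sum.distrib sum_distrib_left sum_distrib_right)
  also have "\<dots> = B * DD J (PP v mu m) x + (\<Sum>i\<in>J. v m $ i * W i)"
    unfolding DD_def W_def s_def
    by (subst sum.swap) (simp add: sum_distrib_left algebra_simps)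
  also have "DD J (PP v mu m) x = 0"
    using Suc.IH[of J x] Suc.prems cc_supp[of J m v] by simp
  also have "(\<Sum>i\<in>J. v m $ i * W i) = (\<Sum>i\<in>J. v m $ i * (2 ^ card J * cc v m (J - {i})))"
  proof (rule sum.cong[OF refl])
    fix i assume i: "i \<in> J"
    have c: "card (J - {i}) = card J - 1" and c1: "card J \<ge> 1"
      using i by (auto simp: card_gt_0_iff Suc_le_eq)
    have "W i = DD (J - {i}) (PP v mu m) (upd x i 1) + DD (J - {i}) (PP v mu m) (upd x i (-1))"
      unfolding W_def by (rule DD_wsplit[OF i])
    also have "\<dots> = 2 * (2 ^ (card J - 1) * cc v m (J - {i}))"
      using Suc.IH[of "J - {i}"] Suc.prems c by simp
    also have "\<dots> = 2 ^ card J * cc v m (J - {i})"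
      using c1 by (cases "card J") auto
    finally show "v m $ i * W i = v m $ i * (2 ^ card J * cc v m (J - {i}))" by simp
  qed
  finally show ?case by (simp add: sum_distrib_left algebra_simps)
qed

theorem mainTheorem2:
  fixes v :: "nat \<Rightarrow> real ^ 'n" and mu :: "nat \<Rightarrow> real" and k :: nat
  assumes "skew_cover k v mu"
  shows "real k \<ge> real CARD('n) / 2"
proof (rule ccontr)
  assume "\<not> ?thesis"
  then have d: "2 * k < CARD('n)" by linarith
  have cov: "\<And>x. x \<in> cube_vertices \<Longrightarrow> \<exists>i<k. v i \<bullet> x = mu i"
    and nz: "\<And>i j. i < k \<Longrightarrow> v i $ j \<noteq> 0"
    using assms unfolding skew_cover_def by auto
  have "\<exists>S. cc v k S \<noteq> 0"
    by (rule cc_nonzero[where v=v and k=k and m=k]) (use nz d in auto)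
  then obtain S where S: "cc v k S \<noteq> 0" by auto
  then have cS: "card S = k" using cc_supp by blast
  define x0 :: "real ^ 'n" where "x0 = (\<chi> i. 1)"
  have "DD S (PP v mu k) x0 = 2 ^ card S * cc v k S" using DD_PP[of k S v mu x0] cS by simp
  moreover have "DD S (PP v mu k) x0 = 0"
    unfolding DD_def
  proof (rule sum.neutral, rule ballI)
    fix A assume "A \<in> Pow S"
    have "yv S A x0 \<in> cube_vertices" unfolding cube_vertices_def yv_def x0_def by auto
    then obtain i where "i < k" "v i \<bullet> yv S A x0 = mu i" using cov by blast
    then have "PP v mu k (yv S A x0) = 0" unfolding PP_def
      by (intro prod_zero) auto
    then show "(-1)^card (S - A) * PP v mu k (yv S A x0) = 0" by simp
  qed
  ultimately show False using S by simp
qed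

end
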